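(* Let $T\ge 2$, let $\mathcal D_1,\dots,\mathcal D_T$ be task distributions, let $f_1,\dots,f_T$ be arbitrary encoders, let $\lambda>0$, and for each $t\in\{2,\dots,T\}$ let $k_{t1},\dots,k_{t,t-1}>0$ with $\sum_{j=1}^{t-1}k_{tj}=1$. Set $\alpha=\frac{2e^2}{1+e^2}$, $\gamma_t(\lambda)=\min\big(\{\tfrac1t\}\cup\{\lambda k_{tj}\}_{j=1}^{t-1}\big)$ and $\gamma'_t(\lambda)=\max\big(\{1\}\cup\{\lambda k_{tj}\}_{j=1}^{t-1}\big)$. Then $$L_{\mathrm{test}}(f_T;\mathcal D_1,\dots,\mathcal D_T)\le \alpha^{T-1}L_{\mathrm{train}}(f_1;\mathcal D_1)+\sum_{t=2}^T\frac{\alpha^{T-t}}{\gamma_t(\lambda)}L_{\mathrm{train}}(f_t;f_{t-1},\mathcal D_t,\mathcal D_{1:t-1})+\eta,$$ $$L_{\mathrm{test}}(f_T;\mathcal D_1,\dots,\mathcal D_T)\ge \alpha^{T-1}L_{\mathrm{train}}(f_1;\mathcal D_1)+\sum_{t=2}^T\frac{\alpha^{T-t}}{\gamma'_t(\lambda)}L_{\mathrm{train}}(f_t;f_{t-1},\mathcal D_t,\mathcal D_{1:t-1})+\eta',$$ where $$\eta=\Big(2-\alpha+\alpha\log\tfrac{\alpha}{2}\Big)\frac{T-1-T\alpha+\alpha^T}{(1-\alpha)^2}+\sum_{t=2}^T\alpha^{T-t}\Big(1-\frac{1}{\gamma_t(\lambda)}\Big)\inf_f L_{\mathrm{con}}(f;\mathcal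 D_t),$$ $$\eta'=-\big(\alpha\log(1+e^2)+\alpha\big)\frac{T-1-T\alpha+\alpha^T}{(1-\alpha)^2},$$ the infimum being over all encoders $f$.
   Context: Let $\mathcal X$ be a measurable input space and $d\ge 1$. An encoder is a measurable map $f:\mathcal X\to\mathbb R^d$ with $\|f(x)\|_2=1$ for all $x$. A task distribution $\mathcal D$ consists of a probability distribution $\mu$ on a countable set of classes together with, for each class $c$, a probability distribution $\mathcal D_c$ on $\mathcal X$. Sampling scheme: $c^+\sim\mu$ and $c^-\sim\mu$ independently; given $c^+$, $x,x^+$ are drawn i.i.d. from $\mathcal D_{c^+}$; given $c^-$, $x^-\sim\mathcal D_{c^-}$ independently. Let $\ell(v)=\log(1+e^{-v})$. The contrastive loss is $L_{\mathrm{con}}(f;\mathcal D)=\mathbb E\big[\ell\big(f(x)^\top(f(x^+)-f(x^-))\big)\big]$. For an encoder $f$ let $\mathbf p(f;x,x^+,x^-)=\mathrm{softmax}\big(f(x)^\top f(x^+),\,f(x)^\top f(x^-)\big)\in\mathbb R^2$. For encoders $g,h$ the distillation loss is $L_{\mathrm{dis}}(g;h,\mathcal D)=\mathbb E\big[-\mathbf p(h;x,x^+,x^-)\cdot\log\mathbf p(g;x,x^+,x^-)\big]$ (logarithm taken componentwise), with the same sampling scheme. For $t\ge2$, the distillation loss on previously seen tasks is $L_{\mathrm{dis}}(f_t;f_{t-1},\mathcal D_{1:t-1}):=\sum_{j=1}^{t-1}k_{tj}\,L_{\mathrm{dis}}(f_t;f_{t-1},\mathcal D_j)$. Training losses: $L_{\mathrm{train}}(f_1;\mathcal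 D_1)=L_{\mathrm{con}}(f_1;\mathcal D_1)$ and, for $t\ge 2$, $L_{\mathrm{train}}(f_t;f_{t-1},\mathcal D_t,\mathcal D_{1:t-1})=L_{\mathrm{con}}(f_t;\mathcal D_t)+\lambda\,L_{\mathrm{dis}}(f_t;f_{t-1},\mathcal D_{1:t-1})$. Test loss: $L_{\mathrm{test}}(f_T;\mathcal D_1,\dots,\mathcal D_T)=\sum_{t=1}^T L_{\mathrm{con}}(f_T;\mathcal D_t)$. *)

theory Defs
  imports "HOL-Probability.Probability"
begin

definition lgl :: "real \<Rightarrow> real" where
  "lgl v = ln (1 + exp (- v))"

definition encoder :: "'x measure \<Rightarrow> ('x \<Rightarrow> real ^ 'd) \<Rightarrow> bool" where
  "encoder M f \<longleftrightarrow> f \<in> borel_measurable M \<and> (\<forall>x\<in>space M. norm (f x) = 1)"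

text \<open>A task distribution: a class distribution mu (on a countable class type)
  together with a class-conditional input distribution D_c for every class c.\<close>
type_synonym ('c, 'x) task = "'c pmf \<times> ('c \<Rightarrow> 'x measure)"

definition task_dist :: "'x measure \<Rightarrow> ('c::countable, 'x) task \<Rightarrow> bool" where
  "task_dist M D \<longleftrightarrow> (\<forall>c. prob_space (snd D c) \<and> sets (snd D c) = sets M)"

text \<open>Expectation under the sampling scheme: c+, c- ~ mu independently,
  x, x+ ~ D_{c+} i.i.d., x- ~ D_{c-}.\<close>
definition samp_exp :: "('c, 'x) task \<Rightarrow> ('x \<Rightarrow> 'x \<Rightarrow> 'x \<Rightarrow> real) \<Rightarrow> real" where
  "samp_exp D F =
     (\<integral>cp. \<integral>cn. \<integral>x. \<integral>xp. \<integral>xn. F x xp xn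
        \<partial>(snd D cn) \<partial>(snd D cp) \<partial>(snd D cp) \<partial>(measure_pmf (fst D)) \<partial>(measure_pmf (fst D)))"

definition L_con :: "('x \<Rightarrow> real ^ 'd) \<Rightarrow> ('c, 'x) task \<Rightarrow> real" where
  "L_con f D = samp_exp D (\<lambda>x xp xn. lgl (f x \<bullet> (f xp - f xn)))"

definition smax1 :: "real \<Rightarrow> real \<Rightarrow> real" where
  "smax1 a b = exp a / (exp a + exp b)"
definition smax2 :: "real \<Rightarrow> real \<Rightarrow> real" where
  "smax2 a b = exp b / (exp a + exp b)"

definition L_dis :: "('x \<Rightarrow> real ^ 'd) \<Rightarrow> ('x \<Rightarrow> real ^ 'd) \<Rightarrow> ('c, 'x) task \<Rightarrow> real" where
  "L_dis g h D = samp_exp D (\<lambda>x xp xn.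
     - (smax1 (h x \<bullet> h xp) (h x \<bullet> h xn) * ln (smax1 (g x \<bullet> g xp) (g x \<bullet> g xn))
      + smax2 (h x \<bullet> h xp) (h x \<bullet> h xn) * ln (smax2 (g x \<bullet> g xp) (g x \<bullet> g xn))))"

text \<open>Training losses (tasks and encoders indexed from 1).\<close>
definition L_train1 :: "('x \<Rightarrow> real ^ 'd) \<Rightarrow> ('c, 'x) task \<Rightarrow> real" where
  "L_train1 f D = L_con f D"

definition L_train ::
  "real \<Rightarrow> (nat \<Rightarrow> nat \<Rightarrow> real) \<Rightarrow> (nat \<Rightarrow> ('c, 'x) task) \<Rightarrow> nat
     \<Rightarrow> ('x \<Rightarrow> real ^ 'd) \<Rightarrow> ('x \<Rightarrow> real ^ 'd) \<Rightarrow> real" where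
  "L_train lam k D t ft fprev =
     L_con ft (D t) + lam * (\<Sum>j = 1..t - 1. k t j * L_dis ft fprev (D j))"

definition L_test :: "('x \<Rightarrow> real ^ 'd) \<Rightarrow> (nat \<Rightarrow> ('c, 'x) task) \<Rightarrow> nat \<Rightarrow> real" where
  "L_test f D T = (\<Sum>t = 1..T. L_con f (D t))"

definition alpha :: real where
  "alpha = 2 * exp 2 / (1 + exp 2)"

definition gam :: "real \<Rightarrow> (nat \<Rightarrow> nat \<Rightarrow> real) \<Rightarrow> nat \<Rightarrow> real" where
  "gam lam k t = Min (insert (1 / real t) ((\<lambda>j. lam * k t j) ` {1..t - 1}))"

definition gam' :: "real \<Rightarrow> (nat \<Rightarrow> nat \<Rightarrow> real) \<Rightarrow> nat \<Rightarrow> real" where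
  "gam' lam k t = Max (insert 1 ((\<lambda>j. lam * k t j) ` {1..t - 1}))"

definition inf_con :: "'x measure \<Rightarrow> ('c, 'x) task \<Rightarrow> ('d::finite) itself \<Rightarrow> real" where
  "inf_con M D _ = (INF f \<in> {f :: 'x \<Rightarrow> real ^ 'd. encoder M f}. L_con f D)"

end

theory Submission
  imports Defs
begin

lemma int_bound:
  fixes \<phi> :: "'a \<Rightarrow> real"
  assumes "prob_space N" "sets N = sets M" "\<phi> \<in> borel_measurable M"
    "\<And>y. y \<in> space M \<Longrightarrow> \<bar>\<phi> y\<bar> \<le> B"
  shows "integrable N \<phi>" "\<bar>integral\<^sup>L N \<phi>\<bar> \<le> B"
proof -
  interpret prob_space N by fact
  have sp: "space N = space M" using assms(2) by (rule sets_eq_imp_space_eq)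
  have m: "\<phi> \<in> borel_measurable N" unfolding measurable_cong_sets[OF assms(2) refl] by (rule assms(3))
  show i: "integrable N \<phi>"
    by (rule integrable_const_bound[where B=B]) (use assms(4) sp m in auto)
  have "integral\<^sup>L N \<phi> \<le> integral\<^sup>L N (\<lambda>_. B)"
    by (rule integral_mono) (use i assms(4) sp abs_le_D1 in auto)
  moreover have "integral\<^sup>L N (\<lambda>_. -B) \<le> integral\<^sup>L N \<phi>"
    by (rule integral_mono) (use i assms(4) sp in force)+
  ultimately show "\<bar>integral\<^sup>L N \<phi>\<bar> \<le> B" by (simp add: prob_space)
qed

lemma level:
  fixes g :: "'k \<Rightarrow> 'a \<Rightarrow> real"
  assumes "prob_space N" "sets N = sets M" "case_prod g \<in> borel_measurable (K \<Otimes>\<^sub>M M)"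
    "\<And>a y. a \<in> space K \<Longrightarrow> y \<in> space M \<Longrightarrow> \<bar>g a y\<bar> \<le> B"
  shows "(\<lambda>a. \<integral>y. g a y \<partial>N) \<in> borel_measurable K"
    "\<And>a. a \<in> space K \<Longrightarrow> integrable N (g a)"
    "\<And>a. a \<in> space K \<Longrightarrow> \<bar>\<integral>y. g a y \<partial>N\<bar> \<le> B"
proof -
  interpret prob_space N by fact
  have "case_prod g \<in> borel_measurable (K \<Otimes>\<^sub>M N)"
    unfolding measurable_cong_sets[OF sets_pair_measure_cong[OF refl assms(2)] refl] by (rule assms(3))
  then show "(\<lambda>a. \<integral>y. g a y \<partial>N) \<in> borel_measurable K"
    by (rule borel_measurable_lebesgue_integral)
  fix a assume a: "a \<in> space K"
  have m: "g a \<in> borel_measurable M"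
    using measurable_Pair2[OF assms(3) a] by simp
  show "integrable N (g a)" "\<bar>\<integral>y. g a y \<partial>N\<bar> \<le> B"
    using int_bound[OF assms(1,2) m, of B] assms(4)[OF a] by auto
qed

definition good :: "'x measure \<Rightarrow> ('x \<Rightarrow> 'x \<Rightarrow> 'x \<Rightarrow> real) \<Rightarrow> bool" where
  "good M F \<longleftrightarrow> (\<lambda>p. F (fst (fst p)) (snd (fst p)) (snd p)) \<in> borel_measurable ((M \<Otimes>\<^sub>M M) \<Otimes>\<^sub>M M)
     \<and> (\<exists>B. \<forall>x\<in>space M. \<forall>y\<in>space M. \<forall>z\<in>space M. \<bar>F x y z\<bar> \<le> B)"

lemma td_space: "task_dist M D \<Longrightarrow> space (snd D c) = space M"
  unfolding task_dist_def by (metis sets_eq_imp_space_eq)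

lemma good_facts:
  assumes td: "task_dist M D" and g: "good M F"
  shows "\<And>cn x y. x\<in>space M \<Longrightarrow> y\<in>space M \<Longrightarrow> integrable (snd D cn) (F x y)"
    "\<And>cn cp x. x\<in>space M \<Longrightarrow> integrable (snd D cp) (\<lambda>y. \<integral>z. F x y z \<partial>snd D cn)"
    "\<And>cn cp. integrable (snd D cp) (\<lambda>x. \<integral>y. \<integral>z. F x y z \<partial>snd D cn \<partial>snd D cp)"
    "\<And>cp. integrable (measure_pmf (fst D)) (\<lambda>cn. \<integral>x. \<integral>y. \<integral>z. F x y z \<partial>snd D cn \<partial>snd D cp \<partial>snd D cp)"
    "integrable (measure_pmf (fst D)) (\<lambda>cp. \<integral>cn. \<integral>x. \<integral>y. \<integral>z. F x y z \<partial>snd D cn \<partial>snd D cp \<partial>snd D cp \<partial>measure_pmf (fst D))"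
proof -
  obtain B where B: "\<And>x y z. x\<in>space M \<Longrightarrow> y\<in>space M \<Longrightarrow> z\<in>space M \<Longrightarrow> \<bar>F x y z\<bar> \<le> B"
    using g unfolding good_def by blast
  have m: "(\<lambda>p. F (fst (fst p)) (snd (fst p)) (snd p)) \<in> borel_measurable ((M \<Otimes>\<^sub>M M) \<Otimes>\<^sub>M M)"
    using g unfolding good_def by blast
  have ps: "\<And>c. prob_space (snd D c)" and ss: "\<And>c. sets (snd D c) = sets M"
    using td unfolding task_dist_def by auto
  have m5': "case_prod (\<lambda>p z. F (fst p) (snd p) z) \<in> borel_measurable ((M \<Otimes>\<^sub>M M) \<Otimes>\<^sub>M M)"
    using m by (simp add: split_beta')
  note L5 = level[OF ps ss m5', where B=B]
  have L5b: "\<And>cn x y. x\<in>space M \<Longrightarrow> y\<in>space M \<Longrightarrow> \<bar>\<integral>z. F x y z \<partial>snd D cn\<bar> \<le> B"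
    using L5(3) B by (auto simp: space_pair_measure)
  show "\<And>cn x y. x\<in>space M \<Longrightarrow> y\<in>space M \<Longrightarrow> integrable (snd D cn) (F x y)"
    using L5(2) B by (force simp: space_pair_measure)
  have m4: "\<And>cn. case_prod (\<lambda>x y. \<integral>z. F x y z \<partial>snd D cn) \<in> borel_measurable (M \<Otimes>\<^sub>M M)"
  proof -
    fix cn
    have "(\<lambda>a. \<integral>z. F (fst a) (snd a) z \<partial>snd D cn) \<in> borel_measurable (M \<Otimes>\<^sub>M M)"
      by (rule L5(1)) (use B in \<open>auto simp: space_pair_measure\<close>)
    then show "case_prod (\<lambda>x y. \<integral>z. F x y z \<partial>snd D cn) \<in> borel_measurable (M \<Otimes>\<^sub>M M)"
      by (simp add: split_beta')
  qed
  note L4 = level[OF ps ss m4, where B=B]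
  show "\<And>cn cp x. x\<in>space M \<Longrightarrow> integrable (snd D cp) (\<lambda>y. \<integral>z. F x y z \<partial>snd D cn)"
    using L4(2) L5b by blast
  have m3: "\<And>cn cp. (\<lambda>x. \<integral>y. \<integral>z. F x y z \<partial>snd D cn \<partial>snd D cp) \<in> borel_measurable M"
    using L4(1) L5b by blast
  have b3: "\<And>cn cp x. x \<in> space M \<Longrightarrow> \<bar>\<integral>y. \<integral>z. F x y z \<partial>snd D cn \<partial>snd D cp\<bar> \<le> B"
    using L4(3) L5b by blast
  note L3 = int_bound[OF ps ss m3 b3]
  show "\<And>cn cp. integrable (snd D cp) (\<lambda>x. \<integral>y. \<integral>z. F x y z \<partial>snd D cn \<partial>snd D cp)"
    using L3(1) .
  have pp: "prob_space (measure_pmf (fst D))" by (rule measure_pmf.prob_space_axioms)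
  note L2 = int_bound[OF pp refl _ L3(2)]
  show "\<And>cp. integrable (measure_pmf (fst D)) (\<lambda>cn. \<integral>x. \<integral>y. \<integral>z. F x y z \<partial>snd D cn \<partial>snd D cp \<partial>snd D cp)"
    using L2(1) by (simp add: measurable_pmf_measure1)
  show "integrable (measure_pmf (fst D)) (\<lambda>cp. \<integral>cn. \<integral>x. \<integral>y. \<integral>z. F x y z \<partial>snd D cn \<partial>snd D cp \<partial>snd D cp \<partial>measure_pmf (fst D))"
    using int_bound[OF pp refl, of _ B] L2(2) by (simp add: measurable_pmf_measure1)
qed

lemma samp_mono:
  assumes td: "task_dist M D" and gF: "good M F" and gG: "good M G"
    and le: "\<And>x y z. x\<in>space M \<Longrightarrow> y\<in>space M \<Longrightarrow> z\<in>space M \<Longrightarrow> F x y z \<le> G x y z"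
  shows "samp_exp D F \<le> samp_exp D G"
proof -
  note F = good_facts[OF td gF] and G = good_facts[OF td gG]
  note sp = td_space[OF td]
  show ?thesis
    unfolding samp_exp_def
    apply (rule integral_mono[OF F(5) G(5)])
    apply (rule integral_mono[OF F(4) G(4)])
    apply (rule integral_mono[OF F(3) G(3)])
    apply (rule integral_mono[OF F(2) G(2)])
    using sp apply blast
    using sp apply blast
    apply (rule integral_mono[OF F(1) G(1)])
    using sp le apply blast+
    done
qed

lemma lin_int:
  fixes g h :: "'a \<Rightarrow> real"
  assumes "prob_space N" "integrable N g" "integrable N h"
    "\<And>y. y\<in>space N \<Longrightarrow> \<phi> y = a * g y + h y + c"
  shows "(\<integral>y. \<phi> y \<partial>N) = a * (\<integral>y. g y \<partial>N) + (\<integral>y. h y \<partial>N) + c"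
proof -
  interpret prob_space N by fact
  have "(\<integral>y. \<phi> y \<partial>N) = (\<integral>y. a * g y + h y + c \<partial>N)"
    by (rule Bochner_Integration.integral_cong) (use assms(4) in auto)
  also have "\<dots> = (\<integral>y. a * g y + h y \<partial>N) + c"
    using assms(2,3) by (subst Bochner_Integration.integral_add) (auto simp: prob_space)
  also have "\<dots> = a * (\<integral>y. g y \<partial>N) + (\<integral>y. h y \<partial>N) + c"
    using assms(2,3) by (subst Bochner_Integration.integral_add) auto
  finally show ?thesis .
qed

lemma samp_lin:
  assumes td: "task_dist M D" and gG: "good M G" and gH: "good M H"
  shows "samp_exp D (\<lambda>x y z. a * G x y z + H x y z + c) = a * samp_exp D G + samp_exp D H + c"
proof -
  note F = good_facts[OF td gG] and G = good_facts[OF td gH]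
  note sp = td_space[OF td]
  have ps: "\<And>c. prob_space (snd D c)" using td unfolding task_dist_def by auto
  have pp: "prob_space (measure_pmf (fst D))" by (rule measure_pmf.prob_space_axioms)
  show ?thesis
    unfolding samp_exp_def
    apply (rule lin_int[OF pp F(5) G(5)])
    apply (rule lin_int[OF pp F(4) G(4)])
    apply (rule lin_int[OF ps F(3) G(3)])
    apply (rule lin_int[OF ps F(2) G(2)])
    using sp apply blast
    using sp apply blast
    apply (rule lin_int[OF ps F(1) G(1)])
    using sp apply blast+
    done
qed

lemma samp_nonneg:
  assumes "\<And>x y z. 0 \<le> F x y z"
  shows "0 \<le> samp_exp D F"
  unfolding samp_exp_def
  by (intro integral_nonneg_AE AE_I2 allI assms)

definition sg :: "real \<Rightarrow> real" where "sg w = 1 / (1 + exp (- w))"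

lemma sg_pos: "0 < sg w" and sg_lt1: "sg w < 1"
  unfolding sg_def by (auto simp: divide_simps add_pos_pos)

lemma lgl_nonneg: "0 \<le> lgl v"
  unfolding lgl_def by simp

lemma lgl_diff: "lgl z - lgl (- z) = - z"
proof -
  have "1 + exp (- z) = exp (- z) * (1 + exp z)" by (simp add: algebra_simps exp_minus_inverse)
  have p: "0 < 1 + exp z" by (simp add: add_pos_pos)
  have "ln (exp (- z) * (1 + exp z)) = ln (exp (- z)) + ln (1 + exp z)"
    by (rule ln_mult_pos) (use p in simp_all)
  then have "ln (1 + exp (- z)) = - z + ln (1 + exp z)"
    using \<open>1 + exp (- z) = exp (- z) * (1 + exp z)\<close> by simp
  then show ?thesis unfolding lgl_def by simp
qed

lemma ln_sg: "ln (sg w) = - lgl w"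
  unfolding sg_def lgl_def by (simp add: ln_div add_pos_pos)

lemma smax1_sg: "smax1 a b = sg (a - b)"
  unfolding smax1_def sg_def
  by (simp add: field_simps exp_diff add_pos_pos exp_minus_inverse)

lemma smax2_sg: "smax2 a b = sg (b - a)"
  unfolding smax2_def sg_def
  by (simp add: field_simps exp_diff add_pos_pos exp_minus_inverse)

lemma sg_neg: "sg (- w) = 1 - sg w"
proof -
  have e: "0 < exp w" by simp
  have "1 / (1 + exp (- w)) = exp w / (1 + exp w)"
    using e by (simp add: exp_minus field_simps)
  moreover have p: "1 + exp w \<noteq> 0" using e by linarith
  moreover have "1 / (1 + exp w) = 1 - exp w / (1 + exp w)"
    using p by (simp add: field_simps)
  ultimately show ?thesis unfolding sg_def by simp
qed

lemma dis_eq: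
  "- (smax1 a b * ln (smax1 c d) + smax2 a b * ln (smax2 c d))
    = sg (a - b) * lgl (c - d) + (1 - sg (a - b)) * lgl (- (c - d))"
proof -
  have "smax2 a b = 1 - sg (a - b)" using sg_neg[of "a - b"] by (simp add: smax2_sg)
  moreover have "ln (smax2 c d) = - lgl (- (c - d))" by (simp add: smax2_sg ln_sg)
  ultimately show ?thesis by (simp add: smax1_sg ln_sg)
qed

lemma alpha_pos: "0 < alpha" unfolding alpha_def by (simp add: add_pos_pos)
lemma alpha_gt1: "1 < alpha"
proof -
  have "1 < exp (2::real)" by simp
  moreover have p: "0 < 1 + exp (2::real)" by (simp add: add_pos_pos)
  ultimately show ?thesis unfolding alpha_def by (simp add: less_divide_eq)
qed
lemma alpha_half: "alpha / 2 = sg 2"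
proof -
  have e: "0 < exp (2::real)" by simp
  have p: "1 + exp (2::real) \<noteq> 0" using e by linarith
  show ?thesis unfolding alpha_def sg_def using e p by (simp add: exp_minus field_simps)
qed

lemma pt_upper:
  assumes "-2 \<le> z"
  shows "lgl z \<le> alpha * lgl w + (sg w * lgl z + (1 - sg w) * lgl (- z)) + (2 - alpha + alpha * ln (alpha / 2))"
proof -
  define u where "u = sg w"
  have u0: "0 < u" and u1: "u < 1" unfolding u_def by (rule sg_pos, rule sg_lt1)
  have e1: "lgl z - (u * lgl z + (1 - u) * lgl (- z)) = - (1 - u) * z"
  proof -
    have "lgl z - (u * lgl z + (1 - u) * lgl (- z)) = (1 - u) * (lgl z - lgl (- z))"
      by (simp add: algebra_simps)
    then show ?thesis using lgl_diff[of z] by (simp add: algebra_simps)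
  qed
  have e2: "lgl w = - ln u" unfolding u_def by (simp add: ln_sg)
  have "(1 - u) * (- z) \<le> (1 - u) * 2" using assms u1 by (intro mult_left_mono) auto
  then have "- (1 - u) * z \<le> 2 * (1 - u)" by (simp add: algebra_simps)
  have a0: "0 < alpha" by (rule alpha_pos)
  have "ln (u / (alpha / 2)) \<le> u / (alpha / 2) - 1"
    by (rule ln_le_minus_one) (use u0 a0 in simp)
  then have "ln u - ln (alpha / 2) \<le> 2 * u / alpha - 1"
    using u0 a0 by (simp add: ln_div ln_mult_pos mult.commute[of u 2])
  then have "alpha * (ln u - ln (alpha / 2)) \<le> alpha * (2 * u / alpha - 1)"
    using a0 by (intro mult_left_mono) auto
  then have "alpha * ln u - alpha * ln (alpha / 2) \<le> 2 * u - alpha"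
    using a0 by (simp add: algebra_simps)
  with e1 e2 \<open>- (1 - u) * z \<le> 2 * (1 - u)\<close> show ?thesis
    unfolding u_def[symmetric] by (simp add: algebra_simps)
qed

lemma pt_lower:
  assumes "z \<le> 2" "-2 \<le> w"
  shows "alpha * lgl w + (sg w * lgl z + (1 - sg w) * lgl (- z)) + - (alpha * ln (1 + exp 2) + alpha) \<le> lgl z"
proof -
  define u where "u = sg w"
  have u0: "0 < u" and u1: "u < 1" unfolding u_def by (rule sg_pos, rule sg_lt1)
  have e1: "lgl z - (u * lgl z + (1 - u) * lgl (- z)) = - (1 - u) * z"
  proof -
    have "lgl z - (u * lgl z + (1 - u) * lgl (- z)) = (1 - u) * (lgl z - lgl (- z))"
      by (simp add: algebra_simps)
    then show ?thesis using lgl_diff[of z] by (simp add: algebra_simps)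
  qed
  have "(1 - u) * z \<le> (1 - u) * 2" using assms u1 by (intro mult_left_mono) auto
  then have z: "- 2 * (1 - u) \<le> - (1 - u) * z" by (simp add: algebra_simps)
  have a0: "0 < alpha" by (rule alpha_pos)
  have "exp (- w) \<le> exp 2" using assms(2) by simp
  then have "lgl w \<le> ln (1 + exp 2)" unfolding lgl_def by (simp add: add_pos_pos)
  then have l: "alpha * lgl w \<le> alpha * ln (1 + exp 2)" using a0 by simp
  have "sg (-2) \<le> sg w" unfolding sg_def using \<open>exp (- w) \<le> exp 2\<close>
    by (intro divide_left_mono) (auto intro!: mult_pos_pos add_pos_pos)
  then have "1 - u \<le> alpha / 2" unfolding u_def using sg_neg[of 2] alpha_half by simp
  define ce where "ce = u * lgl z + (1 - u) * lgl (- z)"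
  define B where "B = (1 - u) * z"
  have "lgl z - ce = - B" using e1 unfolding ce_def B_def by (simp add: algebra_simps)
  moreover have "- 2 * (1 - u) \<le> - B" using \<open>(1 - u) * z \<le> (1 - u) * 2\<close> unfolding B_def by linarith
  ultimately have "alpha * lgl w + ce + - (alpha * ln (1 + exp 2) + alpha) \<le> lgl z"
    using l \<open>1 - u \<le> alpha / 2\<close> by (simp add: field_simps)
  then show ?thesis unfolding u_def[symmetric] ce_def .
qed

lemma good_comb:
  assumes gG: "good M G" and gH: "good M H"
  shows "good M (\<lambda>x y z. a * G x y z + H x y z + c)"
proof -
  have mG[measurable]: "(\<lambda>p. G (fst (fst p)) (snd (fst p)) (snd p)) \<in> borel_measurable ((M \<Otimes>\<^sub>M M) \<Otimes>\<^sub>M M)"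
    using gG unfolding good_def by blast
  have mH[measurable]: "(\<lambda>p. H (fst (fst p)) (snd (fst p)) (snd p)) \<in> borel_measurable ((M \<Otimes>\<^sub>M M) \<Otimes>\<^sub>M M)"
    using gH unfolding good_def by blast
  obtain BG where BG: "\<forall>x\<in>space M. \<forall>y\<in>space M. \<forall>z\<in>space M. \<bar>G x y z\<bar> \<le> BG"
    using gG unfolding good_def by blast
  obtain BH where BH: "\<forall>x\<in>space M. \<forall>y\<in>space M. \<forall>z\<in>space M. \<bar>H x y z\<bar> \<le> BH"
    using gH unfolding good_def by blast
  have "\<forall>x\<in>space M. \<forall>y\<in>space M. \<forall>z\<in>space M. \<bar>a * G x y z + H x y z + c\<bar> \<le> \<bar>a\<bar> * BG + BH + \<bar>c\<bar>"
  proof (intro ballI)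
    fix x y z assume xyz: "x \<in> space M" "y \<in> space M" "z \<in> space M"
    have "\<bar>a * G x y z\<bar> \<le> \<bar>a\<bar> * BG" using BG xyz by (simp add: abs_mult mult_left_mono)
    then show "\<bar>a * G x y z + H x y z + c\<bar> \<le> \<bar>a\<bar> * BG + BH + \<bar>c\<bar>"
      using BH xyz by (smt (verit))
  qed
  moreover have "(\<lambda>p. a * G (fst (fst p)) (snd (fst p)) (snd p) + H (fst (fst p)) (snd (fst p)) (snd p) + c)
      \<in> borel_measurable ((M \<Otimes>\<^sub>M M) \<Otimes>\<^sub>M M)" by measurable
  ultimately show ?thesis unfolding good_def by blast
qed

definition Zf :: "('x \<Rightarrow> real ^ 'd) \<Rightarrow> 'x \<Rightarrow> 'x \<Rightarrow> 'x \<Rightarrow> real" where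
  "Zf g x y z = g x \<bullet> (g y - g z)"

lemma Zf_bound:
  assumes "encoder M g" "x \<in> space M" "y \<in> space M" "z \<in> space M"
  shows "\<bar>Zf g x y z\<bar> \<le> 2"
proof -
  have n: "\<And>v. v \<in> space M \<Longrightarrow> norm (g v) = 1" using assms(1) unfolding encoder_def by auto
  have "\<bar>g x \<bullet> g y\<bar> \<le> norm (g x) * norm (g y)" by (rule Cauchy_Schwarz_ineq2)
  moreover have "\<bar>g x \<bullet> g z\<bar> \<le> norm (g x) * norm (g z)" by (rule Cauchy_Schwarz_ineq2)
  ultimately show ?thesis using n assms unfolding Zf_def by (simp add: inner_diff_right)
qed

lemma Zf_meas:
  assumes "encoder M g"
  shows "(\<lambda>p. Zf g (fst (fst p)) (snd (fst p)) (snd p)) \<in> borel_measurable ((M \<Otimes>\<^sub>M M) \<Otimes>\<^sub>M M)"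
proof -
  have [measurable]: "g \<in> borel_measurable M" using assms unfolding encoder_def by auto
  show ?thesis unfolding Zf_def by measurable
qed

lemma lgl_meas[measurable]: "lgl \<in> borel_measurable borel"
  unfolding lgl_def[abs_def] by measurable
lemma sg_meas[measurable]: "sg \<in> borel_measurable borel"
  unfolding sg_def[abs_def] by measurable

lemma lgl_bound: "\<bar>v\<bar> \<le> 2 \<Longrightarrow> \<bar>lgl v\<bar> \<le> ln (1 + exp 2)"
proof -
  assume "\<bar>v\<bar> \<le> 2"
  then have "exp (- v) \<le> exp 2" by simp
  then have "lgl v \<le> ln (1 + exp 2)" unfolding lgl_def by (simp add: add_pos_pos)
  then show ?thesis using lgl_nonneg[of v] by simp
qed

definition Fc :: "('x \<Rightarrow> real ^ 'd) \<Rightarrow> 'x \<Rightarrow> 'x \<Rightarrow> 'x \<Rightarrow> real" where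
  "Fc g x y z = lgl (Zf g x y z)"

definition Fd :: "('x \<Rightarrow> real ^ 'd) \<Rightarrow> ('x \<Rightarrow> real ^ 'd) \<Rightarrow> 'x \<Rightarrow> 'x \<Rightarrow> 'x \<Rightarrow> real" where
  "Fd g h x y z = sg (Zf h x y z) * lgl (Zf g x y z) + (1 - sg (Zf h x y z)) * lgl (- Zf g x y z)"

lemma L_con_Fc: "L_con g D = samp_exp D (Fc g)"
  unfolding L_con_def Fc_def Zf_def ..

lemma L_dis_Fd: "L_dis g h D = samp_exp D (Fd g h)"
  unfolding L_dis_def Fd_def Zf_def
  by (simp only: dis_eq inner_diff_right)

lemma good_Fc:
  assumes "encoder M g" shows "good M (Fc g)"
proof -
  note [measurable] = Zf_meas[OF assms]
  have "(\<lambda>p. Fc g (fst (fst p)) (snd (fst p)) (snd p)) \<in> borel_measurable ((M \<Otimes>\<^sub>M M) \<Otimes>\<^sub>M M)"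
    unfolding Fc_def by measurable
  moreover have "\<forall>x\<in>space M. \<forall>y\<in>space M. \<forall>z\<in>space M. \<bar>Fc g x y z\<bar> \<le> ln (1 + exp 2)"
    unfolding Fc_def using Zf_bound[OF assms] lgl_bound by blast
  ultimately show ?thesis unfolding good_def by blast
qed

lemma good_Fd:
  assumes "encoder M g" "encoder M h" shows "good M (Fd g h)"
proof -
  note [measurable] = Zf_meas[OF assms(1)] Zf_meas[OF assms(2)]
  have "(\<lambda>p. Fd g h (fst (fst p)) (snd (fst p)) (snd p)) \<in> borel_measurable ((M \<Otimes>\<^sub>M M) \<Otimes>\<^sub>M M)"
    unfolding Fd_def by measurable
  moreover have "\<forall>x\<in>space M. \<forall>y\<in>space M. \<forall>z\<in>space M. \<bar>Fd g h x y z\<bar> \<le> 2 * ln (1 + exp 2)"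
  proof (intro ballI)
    fix x y z assume xyz: "x \<in> space M" "y \<in> space M" "z \<in> space M"
    define s where "s = sg (Zf h x y z)"
    have s: "0 < s" "s < 1" unfolding s_def by (rule sg_pos, rule sg_lt1)
    have b: "\<bar>Zf g x y z\<bar> \<le> 2" by (rule Zf_bound[OF assms(1) xyz])
    have l1: "0 \<le> lgl (Zf g x y z)" "lgl (Zf g x y z) \<le> ln (1 + exp 2)"
      using lgl_bound[OF b] lgl_nonneg by auto
    have l2: "0 \<le> lgl (- Zf g x y z)" "lgl (- Zf g x y z) \<le> ln (1 + exp 2)"
      using lgl_bound[of "- Zf g x y z"] b lgl_nonneg by auto
    have "s * lgl (Zf g x y z) \<le> ln (1 + exp 2)" using s l1 by (smt (verit) mult_left_le_one_le)
    moreover have "(1 - s) * lgl (- Zf g x y z) \<le> ln (1 + exp 2)" using s l2 by (smt (verit) mult_left_le_one_le)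
    moreover have "0 \<le> s * lgl (Zf g x y z)" "0 \<le> (1 - s) * lgl (- Zf g x y z)" using s l1 l2 by auto
    ultimately show "\<bar>Fd g h x y z\<bar> \<le> 2 * ln (1 + exp 2)" unfolding Fd_def s_def[symmetric] by linarith
  qed
  ultimately show ?thesis unfolding good_def by blast
qed

lemma step_upper:
  assumes td: "task_dist M Dj" and eg: "encoder M g" and eh: "encoder M h"
  shows "L_con g Dj \<le> alpha * L_con h Dj + L_dis g h Dj + (2 - alpha + alpha * ln (alpha / 2))"
proof -
  have "samp_exp Dj (Fc g) \<le> samp_exp Dj (\<lambda>x y z. alpha * Fc h x y z + Fd g h x y z + (2 - alpha + alpha * ln (alpha / 2)))"
  proof (rule samp_mono[OF td good_Fc[OF eg] good_comb[OF good_Fc[OF eh] good_Fd[OF eg eh]]])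
    fix x y z assume xyz: "x \<in> space M" "y \<in> space M" "z \<in> space M"
    have "-2 \<le> Zf g x y z" using Zf_bound[OF eg xyz] by simp
    then show "Fc g x y z \<le> alpha * Fc h x y z + Fd g h x y z + (2 - alpha + alpha * ln (alpha / 2))"
      unfolding Fc_def Fd_def by (rule pt_upper)
  qed
  then show ?thesis
    unfolding L_con_Fc L_dis_Fd samp_lin[OF td good_Fc[OF eh] good_Fd[OF eg eh]] .
qed

lemma step_lower:
  assumes td: "task_dist M Dj" and eg: "encoder M g" and eh: "encoder M h"
  shows "alpha * L_con h Dj + L_dis g h Dj + - (alpha * ln (1 + exp 2) + alpha) \<le> L_con g Dj"
proof -
  have "samp_exp Dj (\<lambda>x y z. alpha * Fc h x y z + Fd g h x y z + - (alpha * ln (1 + exp 2) + alpha)) \<le> samp_exp Dj (Fc g)"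
  proof (rule samp_mono[OF td good_comb[OF good_Fc[OF eh] good_Fd[OF eg eh]] good_Fc[OF eg]])
    fix x y z assume xyz: "x \<in> space M" "y \<in> space M" "z \<in> space M"
    have "Zf g x y z \<le> 2" using Zf_bound[OF eg xyz] by simp
    moreover have "-2 \<le> Zf h x y z" using Zf_bound[OF eh xyz] by simp
    ultimately show "alpha * Fc h x y z + Fd g h x y z + - (alpha * ln (1 + exp 2) + alpha) \<le> Fc g x y z"
      unfolding Fc_def Fd_def by (rule pt_lower)
  qed
  then show ?thesis
    unfolding L_con_Fc L_dis_Fd samp_lin[OF td good_Fc[OF eh] good_Fd[OF eg eh]] .
qed

lemma L_con_nonneg: "0 \<le> L_con g D"
  unfolding L_con_Fc Fc_def by (rule samp_nonneg) (rule lgl_nonneg)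

lemma L_dis_nonneg: "0 \<le> L_dis g h D"
  unfolding L_dis_Fd Fd_def
proof (rule samp_nonneg)
  fix x y z
  have "0 < sg (Zf h x y z)" "sg (Zf h x y z) < 1" by (rule sg_pos, rule sg_lt1)
  then show "0 \<le> sg (Zf h x y z) * lgl (Zf g x y z) + (1 - sg (Zf h x y z)) * lgl (- Zf g x y z)"
    using lgl_nonneg by (simp add: add_nonneg_nonneg)
qed

lemma unroll_le:
  fixes A b :: "nat \<Rightarrow> real"
  assumes a0: "0 \<le> a" and st: "\<And>n. 2 \<le> n \<Longrightarrow> n \<le> T \<Longrightarrow> A n \<le> a * A (n - 1) + b n"
  shows "1 \<le> n \<Longrightarrow> n \<le> T \<Longrightarrow> A n \<le> a^(n-1) * A 1 + (\<Sum>t=2..n. a^(n-t) * b t)"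
proof (induction n)
  case 0 then show ?case by simp
next
  case (Suc n)
  show ?case
  proof (cases "n = 0")
    case True then show ?thesis by simp
  next
    case False
    then have IH: "A n \<le> a^(n-1) * A 1 + (\<Sum>t=2..n. a^(n-t) * b t)" using Suc by simp
    have "A (Suc n) \<le> a * A n + b (Suc n)" using st[of "Suc n"] Suc False by simp
    also have "\<dots> \<le> a * (a^(n-1) * A 1 + (\<Sum>t=2..n. a^(n-t) * b t)) + b (Suc n)"
      using IH a0 by (simp add: mult_left_mono)
    also have "\<dots> = a^n * A 1 + (\<Sum>t=2..n. a^(Suc n - t) * b t) + b (Suc n)"
    proof -
      have "a * a^(n-1) = a^n" using False by (simp add: power_eq_if)
      moreover have "a * (\<Sum>t=2..n. a^(n-t) * b t) = (\<Sum>t=2..n. a^(Suc n - t) * b t)"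
        unfolding sum_distrib_left by (rule sum.cong) (auto simp: Suc_diff_le)
      ultimately show ?thesis by (simp add: algebra_simps)
    qed
    also have "\<dots> = a^(Suc n - 1) * A 1 + (\<Sum>t=2..Suc n. a^(Suc n - t) * b t)"
      using False by (simp add: sum.cl_ivl_Suc)
    finally show ?thesis .
  qed
qed

lemma unroll_ge:
  fixes A b :: "nat \<Rightarrow> real"
  assumes a0: "0 \<le> a" and st: "\<And>n. 2 \<le> n \<Longrightarrow> n \<le> T \<Longrightarrow> a * A (n - 1) + b n \<le> A n"
  shows "1 \<le> n \<Longrightarrow> n \<le> T \<Longrightarrow> a^(n-1) * A 1 + (\<Sum>t=2..n. a^(n-t) * b t) \<le> A n"
proof -
  assume n: "1 \<le> n" "n \<le> T"
  have "(\<lambda>n. - A n) n \<le> a^(n-1) * (\<lambda>n. - A n) 1 + (\<Sum>t=2..n. a^(n-t) * (\<lambda>n. - b n) t)"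
  proof (rule unroll_le[where T=T, OF a0 _ n])
    fix m assume "2 \<le> m" "m \<le> T"
    then show "- A m \<le> a * - A (m - 1) + - b m" using st[of m] by simp
  qed
  then show ?thesis by (simp add: sum_negf)
qed

lemma closed_form:
  fixes a :: real
  assumes "a \<noteq> 1"
  shows "1 \<le> n \<Longrightarrow> (\<Sum>t=2..n. a^(n-t) * (real t - 1)) = (real n - 1 - real n * a + a^n) / (1 - a)\<^sup>2"
proof (induction n)
  case 0 then show ?case by simp
next
  case (Suc n)
  have d: "(1 - a)\<^sup>2 \<noteq> 0" using assms by simp
  show ?case
  proof (cases "n = 0")
    case True then show ?thesis using d by (simp add: power2_eq_square)
  next
    case False
    then have IH: "(\<Sum>t=2..n. a^(n-t) * (real t - 1)) = (real n - 1 - real n * a + a^n) / (1 - a)\<^sup>2"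
      using Suc by simp
    have "(\<Sum>t=2..Suc n. a^(Suc n-t) * (real t - 1)) = a * (\<Sum>t=2..n. a^(n-t) * (real t - 1)) + real n"
    proof -
      have "a * (\<Sum>t=2..n. a^(n-t) * (real t - 1)) = (\<Sum>t=2..n. a^(Suc n - t) * (real t - 1))"
        unfolding sum_distrib_left by (rule sum.cong) (auto simp: Suc_diff_le)
      then show ?thesis using False by (simp add: sum.cl_ivl_Suc)
    qed
    also have "\<dots> = (real (Suc n) - 1 - real (Suc n) * a + a^(Suc n)) / (1 - a)\<^sup>2"
      unfolding IH using d by (simp add: field_simps power2_eq_square)
    finally show ?thesis .
  qed
qed

lemma gam_props:
  assumes t: "2 \<le> t" and lam: "lam > 0" and kp: "\<And>j. j \<in> {1..t - 1} \<Longrightarrow> k t j > 0"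
  shows "0 < gam lam k t" "gam lam k t \<le> 1" "\<And>j. j \<in> {1..t - 1} \<Longrightarrow> gam lam k t \<le> lam * k t j"
proof -
  let ?S = "insert (1 / real t) ((\<lambda>j. lam * k t j) ` {1..t - 1})"
  have fin: "finite ?S" by simp
  have "gam lam k t \<in> ?S" unfolding gam_def by (rule Min_in[OF fin]) simp
  moreover have "\<forall>s\<in>?S. 0 < s" using t lam kp by auto
  ultimately show "0 < gam lam k t" by blast
  have "gam lam k t \<le> 1 / real t" unfolding gam_def by (rule Min_le[OF fin]) simp
  also have "\<dots> \<le> 1" using t by simp
  finally show "gam lam k t \<le> 1" .
  fix j assume "j \<in> {1..t - 1}"
  then show "gam lam k t \<le> lam * k t j" unfolding gam_def by (intro Min_le[OF fin]) auto
qed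

lemma gam'_props:
  shows "1 \<le> gam' lam k t" "\<And>j. j \<in> {1..t - 1} \<Longrightarrow> lam * k t j \<le> gam' lam k t"
proof -
  let ?S = "insert 1 ((\<lambda>j. lam * k t j) ` {1..t - 1})"
  have fin: "finite ?S" by simp
  show "1 \<le> gam' lam k t" unfolding gam'_def by (rule Max_ge[OF fin]) simp
  fix j assume "j \<in> {1..t - 1}"
  then show "lam * k t j \<le> gam' lam k t" unfolding gam'_def by (intro Max_ge[OF fin]) auto
qed

lemma test_split:
  assumes "2 \<le> t"
  shows "L_test g D t = (\<Sum>j=1..t-1. L_con g (D j)) + L_con g (D t)"
proof -
  have "t = Suc (t - 1)" using assms by simp
  then have "{1..t} = insert t {1..t-1}" by auto
  then show ?thesis unfolding L_test_def using assms by (simp add: add.commute)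
qed

lemma card_real: "2 \<le> t \<Longrightarrow> (\<Sum>j=1..t-1. (c::real)) = c * (real t - 1)"
  by (simp add: of_nat_diff mult.commute)

lemma inf_le:
  fixes g :: "'x \<Rightarrow> real ^ 'd"
  assumes "encoder M g"
  shows "inf_con M D TYPE('d) \<le> L_con g D"
  unfolding inf_con_def
  apply (rule cINF_lower)
   apply (rule bdd_belowI[where m=0])
   apply (auto intro: L_con_nonneg simp: assms)
  done

lemma step_U:
  fixes f :: "nat \<Rightarrow> 'x \<Rightarrow> real ^ 'd" and D :: "nat \<Rightarrow> ('c::countable, 'x) task"
  assumes t: "2 \<le> t" and tasks: "\<And>j. j \<in> {1..t} \<Longrightarrow> task_dist M (D j)"
    and eg: "encoder M (f t)" and eh: "encoder M (f (t - 1))"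
    and lam: "lam > 0" and kp: "\<And>j. j \<in> {1..t - 1} \<Longrightarrow> k t j > 0"
  shows "L_test (f t) D t \<le> alpha * L_test (f (t - 1)) D (t - 1)
     + (L_train lam k D t (f t) (f (t - 1)) / gam lam k t
        + (2 - alpha + alpha * ln (alpha / 2)) * (real t - 1)
        + (1 - 1 / gam lam k t) * inf_con M (D t) TYPE('d))"
proof -
  define g where "g = f t"
  define h where "h = f (t - 1)"
  define \<gamma> where "\<gamma> = gam lam k t"
  define cc where "cc = 2 - alpha + alpha * ln (alpha / 2)"
  define W where "W = (\<Sum>j=1..t-1. k t j * L_dis g h (D j))"
  define Ds where "Ds = (\<Sum>j=1..t-1. L_dis g h (D j))"
  have gp: "0 < \<gamma>" "\<gamma> \<le> 1" "\<And>j. j \<in> {1..t - 1} \<Longrightarrow> \<gamma> \<le> lam * k t j"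
    unfolding \<gamma>_def using gam_props[where t=t and lam=lam and k=k] t lam kp by blast+
  have s1: "(\<Sum>j=1..t-1. L_con g (D j)) \<le> (\<Sum>j=1..t-1. alpha * L_con h (D j) + L_dis g h (D j) + cc)"
    unfolding cc_def g_def h_def
    by (rule sum_mono, rule step_upper[OF tasks eg eh]) auto
  have s1': "(\<Sum>j=1..t-1. alpha * L_con h (D j) + L_dis g h (D j) + cc) = alpha * L_test h D (t - 1) + Ds + cc * (real t - 1)"
    unfolding Ds_def L_test_def sum.distrib sum_distrib_left card_real[OF t] ..
  have s2: "Ds \<le> lam * W / \<gamma>"
  proof -
    have "Ds \<le> (\<Sum>j=1..t-1. (lam * k t j / \<gamma>) * L_dis g h (D j))"
      unfolding Ds_def
    proof (rule sum_mono)
      fix j assume j: "j \<in> {1..t-1}"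
      have "1 \<le> lam * k t j / \<gamma>" using gp(1) gp(3)[OF j] by simp
      then have "1 * L_dis g h (D j) \<le> (lam * k t j / \<gamma>) * L_dis g h (D j)"
        using L_dis_nonneg[of g h "D j"] by (rule mult_right_mono)
      then show "L_dis g h (D j) \<le> (lam * k t j / \<gamma>) * L_dis g h (D j)"
        by (simp only: mult_1)
    qed
    also have "\<dots> = lam * W / \<gamma>"
      unfolding W_def sum_distrib_left sum_divide_distrib by (rule sum.cong) auto
    finally show ?thesis .
  qed
  have inf: "inf_con M (D t) TYPE('d) \<le> L_con g (D t)" unfolding g_def by (rule inf_le[OF eg])
  have s3: "L_con g (D t) \<le> L_con g (D t) / \<gamma> + (1 - 1 / \<gamma>) * inf_con M (D t) TYPE('d)"
  proof -
    have "0 \<le> (1 / \<gamma> - 1) * (L_con g (D t) - inf_con M (D t) TYPE('d))"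
      using gp(1,2) inf by (intro mult_nonneg_nonneg) (auto simp: field_simps)
    then show ?thesis by (simp add: algebra_simps)
  qed
  have tr: "L_train lam k D t g h / \<gamma> = L_con g (D t) / \<gamma> + lam * W / \<gamma>"
    unfolding L_train_def W_def by (simp add: add_divide_distrib)
  have "L_test g D t = (\<Sum>j=1..t-1. L_con g (D j)) + L_con g (D t)" by (rule test_split[OF t])
  with s1 s1' s2 s3 tr show ?thesis unfolding g_def h_def \<gamma>_def cc_def by linarith
qed

lemma step_L:
  fixes f :: "nat \<Rightarrow> 'x \<Rightarrow> real ^ 'd" and D :: "nat \<Rightarrow> ('c::countable, 'x) task"
  assumes t: "2 \<le> t" and tasks: "\<And>j. j \<in> {1..t} \<Longrightarrow> task_dist M (D j)"
    and eg: "encoder M (f t)" and eh: "encoder M (f (t - 1))"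
    and lam: "lam > 0" and kp: "\<And>j. j \<in> {1..t - 1} \<Longrightarrow> k t j > 0"
  shows "alpha * L_test (f (t - 1)) D (t - 1)
     + (L_train lam k D t (f t) (f (t - 1)) / gam' lam k t
        - (alpha * ln (1 + exp 2) + alpha) * (real t - 1)) \<le> L_test (f t) D t"
proof -
  define g where "g = f t"
  define h where "h = f (t - 1)"
  define \<gamma> where "\<gamma> = gam' lam k t"
  define dd where "dd = alpha * ln (1 + exp 2) + alpha"
  define W where "W = (\<Sum>j=1..t-1. k t j * L_dis g h (D j))"
  define Ds where "Ds = (\<Sum>j=1..t-1. L_dis g h (D j))"
  note gp = gam'_props[where t=t and lam=lam and k=k, folded \<gamma>_def]
  have s1: "(\<Sum>j=1..t-1. alpha * L_con h (D j) + L_dis g h (D j) + - dd) \<le> (\<Sum>j=1..t-1. L_con g (D j))"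
    unfolding dd_def g_def h_def
    by (rule sum_mono, rule step_lower[OF tasks eg eh]) auto
  have s1': "(\<Sum>j=1..t-1. alpha * L_con h (D j) + L_dis g h (D j) + - dd) = alpha * L_test h D (t - 1) + Ds + - dd * (real t - 1)"
    unfolding Ds_def L_test_def sum.distrib sum_distrib_left card_real[OF t] ..
  have s2: "lam * W / \<gamma> \<le> Ds"
  proof -
    have "(\<Sum>j=1..t-1. (lam * k t j / \<gamma>) * L_dis g h (D j)) \<le> Ds"
      unfolding Ds_def
    proof (rule sum_mono)
      fix j assume j: "j \<in> {1..t-1}"
      have "lam * k t j / \<gamma> \<le> 1" using gp(1) gp(2)[OF j] by simp
      moreover have "0 \<le> lam * k t j / \<gamma>" using gp(1) lam kp[OF j] by simp
      ultimately show "(lam * k t j / \<gamma>) * L_dis g h (D j) \<le> L_dis g h (D j)"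
        using L_dis_nonneg[of g h "D j"] by (blast intro: mult_left_le_one_le)
    qed
    moreover have "(\<Sum>j=1..t-1. (lam * k t j / \<gamma>) * L_dis g h (D j)) = lam * W / \<gamma>"
      unfolding W_def sum_distrib_left sum_divide_distrib by (rule sum.cong) auto
    ultimately show ?thesis by simp
  qed
  have s3: "L_con g (D t) / \<gamma> \<le> L_con g (D t)"
    using gp(1) L_con_nonneg[of g "D t"] by (simp add: divide_le_eq mult_le_cancel_left1)
  have tr: "L_train lam k D t g h / \<gamma> = L_con g (D t) / \<gamma> + lam * W / \<gamma>"
    unfolding L_train_def W_def by (simp add: add_divide_distrib)
  have "L_test g D t = (\<Sum>j=1..t-1. L_con g (D j)) + L_con g (D t)" by (rule test_split[OF t])
  with s1 s1' s2 s3 tr show ?thesis unfolding g_def h_def \<gamma>_def dd_def by linarith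
qed

theorem theorem1:
  fixes M :: "'x measure"
    and D :: "nat \<Rightarrow> ('c::countable, 'x) task"
    and f :: "nat \<Rightarrow> ('x \<Rightarrow> real ^ 'd)"
    and lam :: real
    and k :: "nat \<Rightarrow> nat \<Rightarrow> real"
    and T :: nat
  assumes T2: "T \<ge> 2"
    and tasks: "\<And>t. t \<in> {1..T} \<Longrightarrow> task_dist M (D t)"
    and encs: "\<And>t. t \<in> {1..T} \<Longrightarrow> encoder M (f t)"
    and lam_pos: "lam > 0"
    and k_pos: "\<And>t j. t \<in> {2..T} \<Longrightarrow> j \<in> {1..t - 1} \<Longrightarrow> k t j > 0"
    and k_sum: "\<And>t. t \<in> {2..T} \<Longrightarrow> (\<Sum>j = 1..t - 1. k t j) = 1"
  defines "\<eta> \<equiv> (2 - alpha + alpha * ln (alpha / 2))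
                  * ((real T - 1 - real T * alpha + alpha ^ T) / (1 - alpha)\<^sup>2)
               + (\<Sum>t = 2..T. alpha ^ (T - t) * (1 - 1 / gam lam k t)
                               * inf_con M (D t) TYPE('d))"
    and "\<eta>' \<equiv> - (alpha * ln (1 + exp 2) + alpha)
                  * ((real T - 1 - real T * alpha + alpha ^ T) / (1 - alpha)\<^sup>2)"
  shows "(L_test (f T) D T
           \<le> alpha ^ (T - 1) * L_train1 (f 1) (D 1)
             + (\<Sum>t = 2..T. alpha ^ (T - t) / gam lam k t * L_train lam k D t (f t) (f (t - 1)))
             + \<eta>)
       \<and> (L_test (f T) D T
           \<ge> alpha ^ (T - 1) * L_train1 (f 1) (D 1)
             + (\<Sum>t = 2..T. alpha ^ (T - t) / gam' lam k t * L_train lam k D t (f t) (f (t - 1)))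
             + \<eta>')"
proof -
  have a0: "0 \<le> alpha" using alpha_pos by simp
  have a1: "alpha \<noteq> 1" using alpha_gt1 by simp
  define A where "A = (\<lambda>n. L_test (f n) D n)"
  define Ltr where "Ltr = (\<lambda>t. L_train lam k D t (f t) (f (t - 1)))"
  define inf where "inf = (\<lambda>t. inf_con M (D t) TYPE('d))"
  define cc where "cc = 2 - alpha + alpha * ln (alpha / 2)"
  define dd where "dd = alpha * ln (1 + exp 2) + alpha"
  define S where "S = (real T - 1 - real T * alpha + alpha ^ T) / (1 - alpha)\<^sup>2"
  define bU where "bU = (\<lambda>t. Ltr t / gam lam k t + cc * (real t - 1) + (1 - 1 / gam lam k t) * inf t)"
  define bL where "bL = (\<lambda>t. Ltr t / gam' lam k t - dd * (real t - 1))"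
  have T1: "1 \<le> T" using T2 by simp
  have cf: "(\<Sum>t=2..T. alpha^(T-t) * (real t - 1)) = S"
    unfolding S_def by (rule closed_form[OF a1 T1])
  have A1: "A 1 = L_train1 (f 1) (D 1)" unfolding A_def L_test_def L_train1_def by simp
  have pre: "encoder M (f (n - 1))" "encoder M (f n)" "\<And>j. j \<in> {1..n} \<Longrightarrow> task_dist M (D j)"
      "\<And>j. j \<in> {1..n - 1} \<Longrightarrow> k n j > 0" if n: "2 \<le> n" "n \<le> T" for n
  proof -
    show "encoder M (f (n - 1))" using n by (intro encs) auto
    show "encoder M (f n)" using n by (intro encs) auto
    show "\<And>j. j \<in> {1..n} \<Longrightarrow> task_dist M (D j)" using n by (intro tasks) auto
    show "\<And>j. j \<in> {1..n - 1} \<Longrightarrow> k n j > 0" using n by (intro k_pos) auto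
  qed
  have stU: "A n \<le> alpha * A (n - 1) + bU n" if n: "2 \<le> n" "n \<le> T" for n
    unfolding A_def bU_def Ltr_def inf_def cc_def
    by (rule step_U[where t=n and M=M and D=D and f=f and lam=lam and k=k, OF n(1) pre(3)[OF n] pre(2)[OF n] pre(1)[OF n] lam_pos pre(4)[OF n]])
  have stL: "alpha * A (n - 1) + bL n \<le> A n" if n: "2 \<le> n" "n \<le> T" for n
    unfolding A_def bL_def Ltr_def dd_def
    by (rule step_L[where t=n and M=M and D=D and f=f and lam=lam and k=k, OF n(1) pre(3)[OF n] pre(2)[OF n] pre(1)[OF n] lam_pos pre(4)[OF n]])
  have U: "A T \<le> alpha^(T-1) * A 1 + (\<Sum>t=2..T. alpha^(T-t) * bU t)"
    by (rule unroll_le[where T=T and A=A and b=bU and n=T and a=alpha, OF a0 stU T1 order_refl])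
  have L: "alpha^(T-1) * A 1 + (\<Sum>t=2..T. alpha^(T-t) * bL t) \<le> A T"
    by (rule unroll_ge[where T=T and A=A and b=bL and n=T and a=alpha, OF a0 stL T1 order_refl])
  have sU: "(\<Sum>t=2..T. alpha^(T-t) * bU t) = (\<Sum>t=2..T. alpha^(T-t) / gam lam k t * Ltr t)
      + cc * S + (\<Sum>t=2..T. alpha^(T-t) * (1 - 1 / gam lam k t) * inf t)"
  proof -
    have "(\<Sum>t=2..T. alpha^(T-t) * bU t) = (\<Sum>t=2..T. alpha^(T-t) / gam lam k t * Ltr t
        + cc * (alpha^(T-t) * (real t - 1)) + alpha^(T-t) * (1 - 1 / gam lam k t) * inf t)"
      unfolding bU_def by (rule sum.cong) (auto simp: algebra_simps)
    also have "\<dots> = (\<Sum>t=2..T. alpha^(T-t) / gam lam k t * Ltr t)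
      + cc * (\<Sum>t=2..T. alpha^(T-t) * (real t - 1)) + (\<Sum>t=2..T. alpha^(T-t) * (1 - 1 / gam lam k t) * inf t)"
      by (simp add: sum.distrib sum_distrib_left)
    finally show ?thesis unfolding cf .
  qed
  have sL: "(\<Sum>t=2..T. alpha^(T-t) * bL t) = (\<Sum>t=2..T. alpha^(T-t) / gam' lam k t * Ltr t) - dd * S"
  proof -
    have "(\<Sum>t=2..T. alpha^(T-t) * bL t) = (\<Sum>t=2..T. alpha^(T-t) / gam' lam k t * Ltr t
        - dd * (alpha^(T-t) * (real t - 1)))"
      unfolding bL_def by (rule sum.cong) (auto simp: algebra_simps)
    also have "\<dots> = (\<Sum>t=2..T. alpha^(T-t) / gam' lam k t * Ltr t) - dd * (\<Sum>t=2..T. alpha^(T-t) * (real t - 1))"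
      by (simp add: sum_subtractf sum_distrib_left)
    finally show ?thesis unfolding cf .
  qed
  have eta: "\<eta> = cc * S + (\<Sum>t=2..T. alpha^(T-t) * (1 - 1 / gam lam k t) * inf t)"
    unfolding \<eta>_def cc_def S_def inf_def ..
  have eta': "\<eta>' = - dd * S"
    unfolding \<eta>'_def dd_def S_def ..
  show ?thesis
    using U L sU sL A1 eta eta' unfolding A_def Ltr_def by auto
qed

end
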